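(* Let $G$ be a claw-free graph, let $L$ be an induced path or a hole of $G$, and let $\mathbf{j}\notin L$ be a vertex such that $\Gamma_L(\mathbf{j})$ contains three vertices $\mathbf{k}_0,\mathbf{k}_1,\mathbf{k}_2$ with $\mathbf{k}_0\mathbf{k}_1$ and $\mathbf{k}_1\mathbf{k}_2$ edges of $L$. If $\mathbf{j}$ has an additional neighbour $\mathbf{u}\in L\setminus\{\mathbf{k}_0,\mathbf{k}_1,\mathbf{k}_2\}$, then $\mathbf{u}$ is adjacent to at least one of $\mathbf{k}_0$ or $\mathbf{k}_2$.
   Context: A hole is an induced cycle of length at least 4; an induced path is a vertex set whose induced edges are exactly those between consecutive vertices. Claw-free: no induced $K_{1,3}$. $\Gamma_L(\mathbf{j})$ is the set of neighbours of $\mathbf{j}$ in $L$. *)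

theory Defs
  imports Main
begin

definition simple_graph :: "'a set \<Rightarrow> ('a \<Rightarrow> 'a \<Rightarrow> bool) \<Rightarrow> bool" where
  "simple_graph V E \<longleftrightarrow> (\<forall>x y. E x y \<longrightarrow> x \<in> V \<and> y \<in> V \<and> E y x \<and> x \<noteq> y)"

definition claw_free :: "'a set \<Rightarrow> ('a \<Rightarrow> 'a \<Rightarrow> bool) \<Rightarrow> bool" where
  "claw_free V E \<longleftrightarrow> \<not> (\<exists>c\<in>V. \<exists>a\<in>V. \<exists>b\<in>V. \<exists>d\<in>V.
      distinct [c, a, b, d] \<and> E c a \<and> E c b \<and> E c d \<and>
      \<not> E a b \<and> \<not> E a d \<and> \<not> E b d)"

definition induced_path :: "'a set \<Rightarrow> ('a \<Rightarrow> 'a \<Rightarrow> bool) \<Rightarrow> 'a list \<Rightarrow> bool" where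
  "induced_path V E xs \<longleftrightarrow> xs \<noteq> [] \<and> distinct xs \<and> set xs \<subseteq> V \<and>
     (\<forall>i<length xs. \<forall>j<length xs. E (xs ! i) (xs ! j) \<longleftrightarrow> (Suc i = j \<or> Suc j = i))"

definition hole :: "'a set \<Rightarrow> ('a \<Rightarrow> 'a \<Rightarrow> bool) \<Rightarrow> 'a list \<Rightarrow> bool" where
  "hole V E xs \<longleftrightarrow> length xs \<ge> 4 \<and> distinct xs \<and> set xs \<subseteq> V \<and>
     (\<forall>i<length xs. \<forall>j<length xs. E (xs ! i) (xs ! j) \<longleftrightarrow>
        (Suc i mod length xs = j \<or> Suc j mod length xs = i))"

definition path_edge :: "'a list \<Rightarrow> 'a \<Rightarrow> 'a \<Rightarrow> bool" where
  "path_edge xs a b \<longleftrightarrow> (\<exists>i. Suc i < length xs \<and>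
     ((a = xs ! i \<and> b = xs ! Suc i) \<or> (b = xs ! i \<and> a = xs ! Suc i)))"

definition cycle_edge :: "'a list \<Rightarrow> 'a \<Rightarrow> 'a \<Rightarrow> bool" where
  "cycle_edge xs a b \<longleftrightarrow> (\<exists>i<length xs.
     ((a = xs ! i \<and> b = xs ! (Suc i mod length xs)) \<or>
      (b = xs ! i \<and> a = xs ! (Suc i mod length xs))))"

end

theory Submission
  imports Defs
begin

lemma path_nonadj:
  assumes ip: "induced_path V E L" and e1: "path_edge L x y" and e2: "path_edge L y z"
    and d: "distinct [x, y, z]"
  shows "\<not> E x z"
proof -
  have dl: "distinct L" using ip unfolding induced_path_def by blast
  obtain i where i: "Suc i < length L" "(x = L ! i \<and> y = L ! Suc i) \<or> (y = L ! i \<and> x = L ! Suc i)"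
    using e1 unfolding path_edge_def by blast
  obtain k where k: "Suc k < length L" "(y = L ! k \<and> z = L ! Suc k) \<or> (z = L ! k \<and> y = L ! Suc k)"
    using e2 unfolding path_edge_def by blast
  have inj: "\<And>a b. a < length L \<Longrightarrow> b < length L \<Longrightarrow> L ! a = L ! b \<Longrightarrow> a = b"
    using dl nth_eq_iff_index_eq by blast
  have adj: "\<And>a b. a < length L \<Longrightarrow> b < length L \<Longrightarrow> E (L ! a) (L ! b) \<longleftrightarrow> (Suc a = b \<or> Suc b = a)"
    using ip unfolding induced_path_def by blast
  from i k show ?thesis
  proof (elim disjE conjE)
    assume "x = L ! i" "y = L ! Suc i" "y = L ! k" "z = L ! Suc k"
    then have "Suc i = k" using inj i k by simp
    then show ?thesis using adj i k \<open>x = L ! i\<close> \<open>z = L ! Suc k\<close> by simp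
  next
    assume "x = L ! i" "y = L ! Suc i" "z = L ! k" "y = L ! Suc k"
    then have "Suc i = Suc k" using inj i k by (metis Suc_lessD)
    then show ?thesis using d \<open>x = L ! i\<close> \<open>z = L ! k\<close> by simp
  next
    assume "y = L ! i" "x = L ! Suc i" "y = L ! k" "z = L ! Suc k"
    then have "i = k" using inj i k by simp
    then show ?thesis using d \<open>x = L ! Suc i\<close> \<open>z = L ! Suc k\<close> by simp
  next
    assume "y = L ! i" "x = L ! Suc i" "z = L ! k" "y = L ! Suc k"
    then have "i = Suc k" using inj i k by simp
    then show ?thesis using adj i k \<open>x = L ! Suc i\<close> \<open>z = L ! k\<close> by simp
  qed
qed

lemma hole_nonadj:
  assumes ip: "hole V E L" and e1: "cycle_edge L x y" and e2: "cycle_edge L y z"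
    and d: "distinct [x, y, z]"
  shows "\<not> E x z"
proof -
  define n where "n = length L"
  have n4: "n \<ge> 4" using ip unfolding hole_def n_def by blast
  have dl: "distinct L" using ip unfolding hole_def by blast
  have inj: "\<And>a b. a < n \<Longrightarrow> b < n \<Longrightarrow> L ! a = L ! b \<Longrightarrow> a = b"
    using dl nth_eq_iff_index_eq n_def by blast
  have adj: "\<And>a b. a < n \<Longrightarrow> b < n \<Longrightarrow> E (L ! a) (L ! b) \<longleftrightarrow> (Suc a mod n = b \<or> Suc b mod n = a)"
    using ip unfolding hole_def n_def by blast
  have sl: "\<And>a. a < n \<Longrightarrow> Suc a mod n < n" using n4 by simp
  obtain i where i: "i < n" "(x = L ! i \<and> y = L ! (Suc i mod n)) \<or> (y = L ! i \<and> x = L ! (Suc i mod n))"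
    using e1 unfolding cycle_edge_def n_def by blast
  obtain k where k: "k < n" "(y = L ! k \<and> z = L ! (Suc k mod n)) \<or> (z = L ! k \<and> y = L ! (Suc k mod n))"
    using e2 unfolding cycle_edge_def n_def by blast
  have sm: "\<And>a. a < n \<Longrightarrow> Suc a mod n = (if Suc a = n then 0 else Suc a)"
    using n4 by (simp add: mod_Suc)
  from i k show ?thesis
  proof (elim disjE conjE)
    assume "x = L ! i" "y = L ! (Suc i mod n)" "y = L ! k" "z = L ! (Suc k mod n)"
    then have "Suc i mod n = k" using inj i k sl by simp
    then show ?thesis using adj i k sl \<open>x = L ! i\<close> \<open>z = L ! (Suc k mod n)\<close> n4 sm
      by (auto split: if_splits)
  next
    assume "x = L ! i" "y = L ! (Suc i mod n)" "z = L ! k" "y = L ! (Suc k mod n)"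
    then have "Suc i mod n = Suc k mod n" using inj i k sl by simp
    then have "i = k" using i k sm n4 by (auto split: if_splits)
    then show ?thesis using d \<open>x = L ! i\<close> \<open>z = L ! k\<close> by simp
  next
    assume "y = L ! i" "x = L ! (Suc i mod n)" "y = L ! k" "z = L ! (Suc k mod n)"
    then have "i = k" using inj i k by simp
    then show ?thesis using d \<open>x = L ! (Suc i mod n)\<close> \<open>z = L ! (Suc k mod n)\<close> by simp
  next
    assume "y = L ! i" "x = L ! (Suc i mod n)" "z = L ! k" "y = L ! (Suc k mod n)"
    then have "i = Suc k mod n" using inj i k sl by simp
    then show ?thesis using adj i k sl \<open>x = L ! (Suc i mod n)\<close> \<open>z = L ! k\<close> n4 sm
      by (auto split: if_splits)
  qed
qed

theorem corollary2:
  fixes V :: "'a set" and E :: "'a \<Rightarrow> 'a \<Rightarrow> bool" and L :: "'a list"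
    and j k0 k1 k2 u :: 'a
  assumes "simple_graph V E"
    and "claw_free V E"
    and "(induced_path V E L \<and> path_edge L k0 k1 \<and> path_edge L k1 k2) \<or>
         (hole V E L \<and> cycle_edge L k0 k1 \<and> cycle_edge L k1 k2)"
    and "j \<in> V" and "j \<notin> set L"
    and "distinct [k0, k1, k2]"
    and "k0 \<in> set L" and "k1 \<in> set L" and "k2 \<in> set L"
    and "E j k0" and "E j k1" and "E j k2"
    and "u \<in> set L" and "u \<notin> {k0, k1, k2}" and "E j u"
  shows "E u k0 \<or> E u k2"
proof (rule ccontr)
  assume na: "\<not> (E u k0 \<or> E u k2)"
  have nk: "\<not> E k0 k2" using assms(3,6) path_nonadj hole_nonadj by metis
  have sym: "\<And>a b. E a b \<Longrightarrow> E b a" using assms(1) unfolding simple_graph_def by blast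
  have V: "k0 \<in> V" "k2 \<in> V" "u \<in> V" using assms(1,10,12,15) unfolding simple_graph_def by blast+
  have "distinct [j, k0, k2, u]" using assms(5-9,13,14) by auto
  then show False using assms(2,4,10,12,15) V na nk sym unfolding claw_free_def by blast
qed

end
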